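(* Let $E$, $\Lambda_\pm$, $\Lambda_+^*$, $\omega$, $\sigma'$ and $\pi_-\colon Q\to\mathbb P(\Lambda_-)$ be as in the context. Let $v=(\sigma,\tau)\in\Lambda_+\oplus\Lambda_+^*$ be a nonzero isotropic vector and let $\lambda=\tau/(\sigma\lrcorner\omega)\in\mathbb C\cup\{\infty\}$ (i.e. $\tau=\lambda\,\sigma\lrcorner\omega$ if $\sigma\ne0$, and $\lambda=\infty$ if $\sigma=0$). Then $\pi_-([v])$ is the line spanned by $(\sigma',\lambda\,\sigma'\lrcorner\omega)$ (interpreted as $(0,\sigma'\lrcorner\omega)$ if $\lambda=\infty$).
   Context: $E$ is a 4-dimensional complex vector space with nondegenerate symmetric bilinear form $q$; one connected component of the space of 2-dimensional isotropic subspaces is fixed and called positive, the other negative. Every isotropic line $\langle v\rangle$ lies in a unique positive maximal isotropic subspace $\Lambda_v^+$ and a unique negative one $\Lambda_v^-$. $\Lambda_+$ is a fixed positive and $\Lambda_-$ a fixed negative maximal isotropic subspace; $\Lambda_+\cap\Lambda_-$ is a line, spanned by $\sigma'$. $\Lambda'$ is a maximal isotropic subspace with $\Lambda_+\cap\Lambda'=0$, identified with $\Lambda_+^*$ via $q$, so $E=\Lambda_+\oplus\Lambda_+^*$ and $(\sigma,\tau)$ is isotropic iff $\tau(\sigma)=0$. $\omega\in\bigwedge^2\Lambda_+^*$ is nonzero and $\sigma\lrcorner\omega=\omega(\sigma,\cdot)\in\Lambda_+^*$; for isotropic $(\sigma,\tau)$, $\tau$ and $\sigma\lrcorner\omega$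 are proportional. $Q\subset\mathbb P(E)$ is the quadric of isotropic lines and $\pi_-\colon Q\to\mathbb P(\Lambda_-)$ is $[v]\mapsto\Lambda_v^+\cap\Lambda_-$. *)

theory Defs
  imports "HOL-Analysis.Analysis"
begin

text \<open>The positive maximal isotropic subspace \<Lambda>+ is complex^2, its dual \<Lambda>+* is
  complex^2 with the standard pairing, and E = \<Lambda>+ \<oplus> \<Lambda>+* is complex^4 with coordinates
  (sigma 1, sigma 2, tau 1, tau 2).  Linear algebra (span, subspace, dim) is complex linear
  algebra via the library interpretation vec of vector_space (*s).\<close>

type_synonym lam = "complex ^ 2"
type_synonym espace = "complex ^ 4"

definition pairing :: "lam \<Rightarrow> lam \<Rightarrow> complex" where
  "pairing t s = t$1 * s$1 + t$2 * s$2"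

definition mkE :: "lam \<Rightarrow> lam \<Rightarrow> espace" where
  "mkE s t = (\<chi> i::4. if i = 1 then s$1 else if i = 2 then s$2 else if i = 3 then t$1 else t$2)"

definition sigE :: "espace \<Rightarrow> lam" where
  "sigE v = (\<chi> i::2. if i = 1 then v$1 else v$2)"

definition tauE :: "espace \<Rightarrow> lam" where
  "tauE v = (\<chi> i::2. if i = 1 then v$3 else v$4)"

definition qf :: "espace \<Rightarrow> espace \<Rightarrow> complex" where
  "qf v w = pairing (tauE v) (sigE w) + pairing (tauE w) (sigE v)"

definition iso_sub :: "espace set \<Rightarrow> bool" where
  "iso_sub L \<longleftrightarrow> vec.subspace L \<and> (\<forall>v\<in>L. \<forall>w\<in>L. qf v w = 0)"

definition max_iso :: "espace set \<Rightarrow> bool" where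
  "max_iso L \<longleftrightarrow> iso_sub L \<and> (\<forall>M. iso_sub M \<and> L \<subseteq> M \<longrightarrow> M = L)"

definition Lplus :: "espace set" where
  "Lplus = {mkE s 0 | s. True}"

text \<open>Two maximal isotropic subspaces of a 4-dimensional quadratic space lie in the same
  connected component iff their intersection has even dimension.\<close>
definition positive :: "espace set \<Rightarrow> bool" where
  "positive L \<longleftrightarrow> max_iso L \<and> even (vec.dim (L \<inter> Lplus))"

definition negative :: "espace set \<Rightarrow> bool" where
  "negative L \<longleftrightarrow> max_iso L \<and> odd (vec.dim (L \<inter> Lplus))"

definition Lam_pos :: "espace \<Rightarrow> espace set" where
  "Lam_pos v = (THE L. positive L \<and> v \<in> L)"

definition pi_minus :: "espace set \<Rightarrow> espace \<Rightarrow> espace set" where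
  "pi_minus Lminus v = Lam_pos v \<inter> Lminus"

definition alt_form :: "(lam \<Rightarrow> lam \<Rightarrow> complex) \<Rightarrow> bool" where
  "alt_form w \<longleftrightarrow>
     (\<forall>x y z. w (x + y) z = w x z + w y z) \<and> (\<forall>c x y. w (c *s x) y = c * w x y) \<and>
     (\<forall>x y z. w x (y + z) = w x y + w x z) \<and> (\<forall>c x y. w x (c *s y) = c * w x y) \<and>
     (\<forall>x. w x x = 0)"

text \<open>Contraction sigma \<lrcorner> omega = omega(sigma, _) as an element of \<Lambda>+* = complex^2
  (coordinates w.r.t. the dual basis), so pairing (contr w s) x = w s x.\<close>
definition contr :: "(lam \<Rightarrow> lam \<Rightarrow> complex) \<Rightarrow> lam \<Rightarrow> lam" where
  "contr w s = (\<chi> i. w s (axis i 1))"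

end

theory Submission
  imports Defs
begin

lemma mkE_nth[simp]: "mkE s t $ 1 = s$1" "mkE s t $ 2 = s$2" "mkE s t $ 3 = t$1" "mkE s t $ 4 = t$2"
  by (simp_all add: mkE_def)

lemma lam_eq: "(x::lam) = y \<longleftrightarrow> x$1 = y$1 \<and> x$2 = y$2"
  by (auto simp: vec_eq_iff forall_2)

lemma esp_eq: "(x::espace) = y \<longleftrightarrow> x$1 = y$1 \<and> x$2 = y$2 \<and> x$3 = y$3 \<and> x$4 = y$4"
  by (auto simp: vec_eq_iff forall_4)

lemma sigE_nth[simp]: "sigE v $ 1 = v$1" "sigE v $ 2 = v$2" by (simp_all add: sigE_def)
lemma tauE_nth[simp]: "tauE v $ 1 = v$3" "tauE v $ 2 = v$4" by (simp_all add: tauE_def)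

lemma mkE_split: "v = mkE (sigE v) (tauE v)"
  by (simp add: esp_eq)

lemma mkE_inj[simp]: "mkE s t = mkE s' t' \<longleftrightarrow> s = s' \<and> t = t'"
  by (auto simp: esp_eq lam_eq)

lemma mkE_add: "mkE s t + mkE s' t' = mkE (s+s') (t+t')"
  by (simp add: esp_eq)
lemma mkE_smult: "c *s mkE s t = mkE (c *s s) (c *s t)"
  by (simp add: esp_eq)
lemma mkE_diff: "mkE s t - mkE s' t' = mkE (s-s') (t-t')"
  by (simp add: esp_eq)
lemma mkE_zero: "mkE 0 0 = 0" by (simp add: esp_eq)
lemma mkE_eq0[simp]: "mkE s t = 0 \<longleftrightarrow> s = 0 \<and> t = 0"
  by (metis mkE_inj mkE_zero)

lemma qf_mkE: "qf (mkE s t) (mkE s' t') = pairing t s' + pairing t' s"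
  by (simp add: qf_def pairing_def)

definition J :: "complex \<Rightarrow> lam \<Rightarrow> lam" where
  "J k s = (\<chi> i. if i = 1 then - k * s$2 else k * s$1)"

lemma J_nth[simp]: "J k s $ 1 = - k * s$2" "J k s $ 2 = k * s$1"
  by (simp_all add: J_def)

lemma alt_formula:
  assumes "alt_form w"
  shows "w x y = w (axis 1 1) (axis 2 1) * (x$1* y$2 - x$2* y$1)"
proof -
  let ?e1 = "axis 1 1 :: lam" and ?e2 = "axis 2 1 :: lam"
  have dx: "x = x$1 *s ?e1 + x$2 *s ?e2" by (simp add: lam_eq axis_def)
  have dy: "y = y$1 *s ?e1 + y$2 *s ?e2" by (simp add: lam_eq axis_def)
  have A: "\<forall>x y z. w (x + y) z = w x z + w y z" "\<forall>c x y. w (c *s x) y = c * w x y"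
    "\<forall>x y z. w x (y + z) = w x y + w x z" "\<forall>c x y. w x (c *s y) = c * w x y" "\<forall>x. w x x = 0"
    using assms by (auto simp: alt_form_def)
  have "w (?e1 + ?e2) (?e1 + ?e2) = 0" using A by blast
  moreover have "w (?e1 + ?e2) (?e1 + ?e2) = w ?e1 ?e1 + w ?e1 ?e2 + (w ?e2 ?e1 + w ?e2 ?e2)"
    using A(1,3) by simp
  ultimately have anti: "w ?e2 ?e1 = - w ?e1 ?e2" using A(5) by (simp add: add_eq_0_iff)
  have "w x y = w (x$1 *s ?e1 + x$2 *s ?e2) (y$1 *s ?e1 + y$2 *s ?e2)" by (rule arg_cong2[where f=w, OF dx dy])
  also have "\<dots> = x$1* y$1 * w ?e1 ?e1 + x$1* y$2 * w ?e1 ?e2 + x$2* y$1 * w ?e2 ?e1 + x$2* y$2 * w ?e2 ?e2"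
    using A by (simp add: algebra_simps)
  finally show ?thesis using A anti by (simp add: algebra_simps)
qed

lemma contr_J:
  assumes "alt_form w"
  shows "contr w = J (w (axis 1 1) (axis 2 1))"
proof
  fix s
  have a: "w s (axis 1 1) = w (axis 1 1) (axis 2 1) * (s$1 * 0 - s$2 * 1)"
    using alt_formula[OF assms, of s "axis 1 1"] by (simp add: axis_def)
  have b: "w s (axis 2 1) = w (axis 1 1) (axis 2 1) * (s$1 * 1 - s$2 * 0)"
    using alt_formula[OF assms, of s "axis 2 1"] by (simp add: axis_def)
  show "contr w s = J (w (axis 1 1) (axis 2 1)) s"
    unfolding lam_eq using a b by (simp add: contr_def)
qed

lemma k_nz:
  assumes "alt_form w" "w \<noteq> (\<lambda>_ _. 0)"
  shows "w (axis 1 1) (axis 2 1) \<noteq> 0"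
proof
  assume k: "w (axis 1 1) (axis 2 1) = 0"
  have "w x y = 0" for x y using alt_formula[OF assms(1), of x y] k by simp
  thus False using assms(2) by blast
qed

lemma pairing_c: "pairing t s = t$1* s$1 + t$2* s$2" by (simp add: pairing_def)

lemma J_smult: "J k (a *s s) = a *s J k s" by (simp add: lam_eq)
lemma J_eq0: "k \<noteq> 0 \<Longrightarrow> J k s = 0 \<longleftrightarrow> s = 0" by (auto simp: lam_eq)

lemma par: assumes "(\<sigma>::lam) \<noteq> 0" "\<sigma>$1 * s$2 - \<sigma>$2 * s$1 = 0" shows "\<exists>a. s = a *s \<sigma>"
proof (cases "\<sigma>$1 = 0")
  case True
  hence "\<sigma>$2 \<noteq> 0" using assms(1) by (auto simp: lam_eq)
  hence "s = (s$2/\<sigma>$2) *s \<sigma>" using assms(2) True by (auto simp: lam_eq)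
  thus ?thesis by blast
next
  case False
  hence "s = (s$1/\<sigma>$1) *s \<sigma>" using assms(2) by (auto simp: lam_eq field_simps)
  thus ?thesis by blast
qed

lemma ann: assumes "k \<noteq> 0" "(\<sigma>::lam) \<noteq> 0" "pairing t \<sigma> = 0" shows "\<exists>b. t = b *s J k \<sigma>"
proof (cases "\<sigma>$1 = 0")
  case True
  hence s2: "\<sigma>$2 \<noteq> 0" using assms(2) by (auto simp: lam_eq)
  have "t$2 = 0" using assms(3) True s2 by (simp add: pairing_c)
  hence "t = (- t$1/(k*\<sigma>$2)) *s J k \<sigma>" using True s2 assms(1) by (auto simp: lam_eq)
  thus ?thesis by blast
next
  case False
  have "t$1*\<sigma>$1 = - t$2*\<sigma>$2" using assms(3) by (simp add: pairing_c add_eq_0_iff)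
  hence "t = (t$2/(k*\<sigma>$1)) *s J k \<sigma>" using False assms(1) by (auto simp: lam_eq field_simps)
  thus ?thesis by blast
qed

definition G :: "complex \<Rightarrow> complex \<Rightarrow> espace set" where
  "G k l = range (\<lambda>s. mkE s (l *s J k s))"
definition H :: "espace set" where
  "H = range (\<lambda>t. mkE 0 t)"
definition N :: "complex \<Rightarrow> lam \<Rightarrow> espace set" where
  "N k \<sigma> = {mkE (a *s \<sigma>) (b *s J k \<sigma>) | a b. True}"

lemma qf_self: "qf (mkE s t) (mkE s t) = 2 * pairing t s"
  by (simp add: qf_mkE)

lemma pair_J: "pairing (J k s) y = k * (s$1* y$2 - s$2* y$1)"
  by (simp add: pairing_c algebra_simps)

lemma iso_G: "iso_sub (G k l)"
  unfolding iso_sub_def vec.subspace_def G_def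
proof (intro conjI ballI allI)
  show "0 \<in> range (\<lambda>s. mkE s (l *s J k s))" by (rule image_eqI[of _ _ 0]) (auto simp: lam_eq)
next
  fix x y assume "x \<in> range (\<lambda>s. mkE s (l *s J k s))" "y \<in> range (\<lambda>s. mkE s (l *s J k s))"
  then obtain s s' where "x = mkE s (l *s J k s)" "y = mkE s' (l *s J k s')" by auto
  then show "x + y \<in> range (\<lambda>s. mkE s (l *s J k s))"
    by (intro image_eqI[of _ _ "s+s'"]) (auto simp: mkE_add lam_eq algebra_simps)
  show "qf x y = 0" using \<open>x = _\<close> \<open>y = _\<close> by (simp add: qf_mkE pairing_c algebra_simps)
next
  fix c x assume "x \<in> range (\<lambda>s. mkE s (l *s J k s))"
  then obtain s where "x = mkE s (l *s J k s)" by auto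
  then show "c *s x \<in> range (\<lambda>s. mkE s (l *s J k s))"
    by (intro image_eqI[of _ _ "c *s s"]) (auto simp: mkE_smult lam_eq algebra_simps)
qed

lemma iso_H: "iso_sub H"
  unfolding iso_sub_def vec.subspace_def H_def
proof (intro conjI ballI allI)
  show "0 \<in> range (\<lambda>t. mkE 0 t)" by (rule image_eqI[of _ _ 0]) (auto simp: lam_eq)
next
  fix x y assume "x \<in> range (\<lambda>t. mkE 0 t)" "y \<in> range (\<lambda>t. mkE 0 t)"
  then obtain s s' where "x = mkE 0 s" "y = mkE 0 s'" by auto
  then show "x + y \<in> range (\<lambda>t. mkE 0 t)"
    by (intro image_eqI[of _ _ "s+s'"]) (auto simp: mkE_add)
  show "qf x y = 0" using \<open>x = _\<close> \<open>y = _\<close> by (simp add: qf_mkE pairing_c)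
next
  fix c x assume "x \<in> range (\<lambda>t. mkE 0 t)"
  then obtain s where "x = mkE 0 s" by auto
  then show "c *s x \<in> range (\<lambda>t. mkE 0 t)"
    by (intro image_eqI[of _ _ "c *s s"]) (auto simp: mkE_smult)
qed

lemma iso_N: "iso_sub (N k \<sigma>)"
  unfolding iso_sub_def vec.subspace_def N_def
proof (intro conjI ballI allI)
  show "0 \<in> {mkE (a *s \<sigma>) (b *s J k \<sigma>) | a b. True}"
    by (rule CollectI, rule exI[of _ 0], rule exI[of _ 0]) (simp add: mkE_zero)
next
  fix x y assume "x \<in> {mkE (a *s \<sigma>) (b *s J k \<sigma>) | a b. True}" "y \<in> {mkE (a *s \<sigma>) (b *s J k \<sigma>) | a b. True}"
  then obtain a b a' b' where xy: "x = mkE (a *s \<sigma>) (b *s J k \<sigma>)" "y = mkE (a' *s \<sigma>) (b' *s J k \<sigma>)" by auto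
  then show "x + y \<in> {mkE (a *s \<sigma>) (b *s J k \<sigma>) | a b. True}"
    by (intro CollectI exI[of _ "a+a'"] exI[of _ "b+b'"]) (auto simp: mkE_add lam_eq algebra_simps)
  show "qf x y = 0" using xy by (simp add: qf_mkE pairing_c algebra_simps)
next
  fix c x assume "x \<in> {mkE (a *s \<sigma>) (b *s J k \<sigma>) | a b. True}"
  then obtain a b where "x = mkE (a *s \<sigma>) (b *s J k \<sigma>)" by auto
  then show "c *s x \<in> {mkE (a *s \<sigma>) (b *s J k \<sigma>) | a b. True}"
    by (intro CollectI exI[of _ "c*a"] exI[of _ "c*b"]) (auto simp: mkE_smult lam_eq algebra_simps)
qed

lemma max_G: "max_iso (G k l)"
  unfolding max_iso_def
proof (intro conjI allI impI iso_G)
  fix M assume M: "iso_sub M \<and> G k l \<subseteq> M"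
  have sub: "vec.subspace M" and iso: "\<forall>v\<in>M. \<forall>w\<in>M. qf v w = 0" using M by (auto simp: iso_sub_def)
  have "M \<subseteq> G k l"
  proof
    fix x assume x: "x \<in> M"
    define s where "s = sigE x"
    define t where "t = tauE x"
    have xe: "x = mkE s t" using mkE_split s_def t_def by blast
    have inG: "mkE e (l *s J k e) \<in> M" for e using M unfolding G_def by auto
    have "x - mkE s (l *s J k s) \<in> M" using vec.subspace_diff[OF sub x inG] .
    hence dM: "mkE 0 (t - l *s J k s) \<in> M" using xe by (simp add: mkE_diff)
    have "qf (mkE 0 (t - l *s J k s)) (mkE e (l *s J k e)) = 0" for e using iso dM inG by blast
    hence "pairing (t - l *s J k s) e = 0" for e by (simp add: qf_mkE pairing_c)
    from this[of "axis 1 1"] this[of "axis 2 1"] have "t = l *s J k s"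
      by (simp add: pairing_c axis_def lam_eq eq_neg_iff_add_eq_0)
    thus "x \<in> G k l" using xe unfolding G_def by auto
  qed
  thus "M = G k l" using M by blast
qed

lemma max_H: "max_iso H"
  unfolding max_iso_def
proof (intro conjI allI impI iso_H)
  fix M assume M: "iso_sub M \<and> H \<subseteq> M"
  have iso: "\<forall>v\<in>M. \<forall>w\<in>M. qf v w = 0" using M by (auto simp: iso_sub_def)
  have "M \<subseteq> H"
  proof
    fix x assume x: "x \<in> M"
    define s where "s = sigE x"
    define t where "t = tauE x"
    have xe: "x = mkE s t" using mkE_split s_def t_def by blast
    have inH: "mkE 0 e \<in> M" for e using M unfolding H_def by auto
    have "qf x (mkE 0 e) = 0" for e using iso x inH by blast
    hence "pairing e s = 0" for e using xe by (simp add: qf_mkE pairing_c)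
    from this[of "axis 1 1"] this[of "axis 2 1"] have "s = 0"
      by (simp add: pairing_c axis_def lam_eq)
    thus "x \<in> H" using xe unfolding H_def by auto
  qed
  thus "M = H" using M by blast
qed

lemma Lplus_G: "Lplus = G k 0"
  by (auto simp: Lplus_def G_def)

lemma sub_Lplus: "vec.subspace Lplus"
  using iso_G[of 1 0] by (simp add: Lplus_G[symmetric] iso_sub_def)

lemma dim_Lplus: "vec.dim Lplus = 2"
proof -
  let ?a = "mkE (axis 1 1) 0" and ?b = "mkE (axis 2 1) 0"
  have ne: "?a \<noteq> ?b" by (simp add: lam_eq axis_def)
  have "?a \<notin> vec.span {?b}"
    by (auto simp: vec.span_singleton lam_eq axis_def mkE_smult)
  moreover have "?b \<notin> vec.span {}" by (simp add: lam_eq axis_def)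
  ultimately have ind: "vec.independent {?a, ?b}"
    by (intro vec.independent_insertI vec.independent_empty) auto
  have sub: "{?a, ?b} \<subseteq> Lplus" by (auto simp: Lplus_def)
  have "card {?a, ?b} \<le> vec.dim Lplus" by (rule vec.independent_card_le_dim[OF sub ind])
  hence ge: "2 \<le> vec.dim Lplus" using ne by simp
  have "Lplus \<subseteq> vec.span {?a, ?b}"
  proof
    fix x assume "x \<in> Lplus"
    then obtain s where x: "x = mkE s 0" by (auto simp: Lplus_def)
    have "x = s$1 *s ?a + s$2 *s ?b" using x by (simp add: esp_eq axis_def)
    also have "\<dots> \<in> vec.span {?a, ?b}"
      by (intro vec.span_add vec.span_scale vec.span_base) auto
    finally show "x \<in> vec.span {?a, ?b}" .
  qed
  hence "vec.dim Lplus \<le> card {?a, ?b}" by (intro vec.dim_le_card) auto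
  hence "vec.dim Lplus \<le> 2" using ne by simp
  with ge show ?thesis by simp
qed

lemma parity:
  assumes "positive L"
  shows "L \<inter> Lplus \<subseteq> {0} \<or> Lplus \<subseteq> L"
proof -
  have ev: "even (vec.dim (L \<inter> Lplus))" and sL: "vec.subspace L"
    using assms by (auto simp: positive_def max_iso_def iso_sub_def)
  have sS: "vec.subspace (L \<inter> Lplus)" by (rule vec.subspace_inter[OF sL sub_Lplus])
  show ?thesis
  proof (cases "vec.dim (L \<inter> Lplus) = 0")
    case True thus ?thesis by simp
  next
    case False
    have "\<And>n::nat. even n \<Longrightarrow> n \<noteq> 0 \<Longrightarrow> 2 \<le> n" by presburger
    with ev False have "2 \<le> vec.dim (L \<inter> Lplus)" by blast
    hence "vec.dim Lplus \<le> vec.dim (L \<inter> Lplus)" by (simp add: dim_Lplus)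
    hence "vec.span (L \<inter> Lplus) = vec.span Lplus" by (intro vec.dim_eq_span) auto
    hence "L \<inter> Lplus = Lplus" using sS sub_Lplus by (metis vec.span_eq_iff)
    thus ?thesis by blast
  qed
qed

lemma pos_dim0: "max_iso L \<Longrightarrow> L \<inter> Lplus \<subseteq> {0} \<Longrightarrow> positive L"
proof -
  assume a: "max_iso L" "L \<inter> Lplus \<subseteq> {0}"
  have d: "vec.dim (L \<inter> Lplus) \<le> vec.dim {0::espace}" using vec.dim_subset[OF a(2)] .
  have "vec.dim {0::espace} = 0" by simp
  with d have "vec.dim (L \<inter> Lplus) = 0" by simp
  thus "positive L" using a(1) unfolding positive_def by (simp del: vec.dim_eq_0)
qed


lemma nondeg: "(t::lam) \<noteq> 0 \<Longrightarrow> \<exists>e. pairing t e \<noteq> 0"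
proof (cases "t$1 = 0")
  case True
  assume "t \<noteq> 0"
  hence "t$2 \<noteq> 0" using True by (auto simp: lam_eq)
  hence "pairing t (axis 2 1) \<noteq> 0" by (simp add: pairing_c axis_def)
  thus ?thesis by blast
next
  case False
  hence "pairing t (axis 1 1) \<noteq> 0" by (simp add: pairing_c axis_def)
  thus ?thesis by blast
qed

lemma pos_G: assumes "k \<noteq> 0" shows "positive (G k l)"
proof (cases "l = 0")
  case True
  hence "G k l = Lplus" using Lplus_G by simp
  thus ?thesis using max_G[of k l] by (simp add: positive_def dim_Lplus)
next
  case False
  have "G k l \<inter> Lplus \<subseteq> {0}"
  proof
    fix x assume "x \<in> G k l \<inter> Lplus"
    then obtain s s' where "x = mkE s (l *s J k s)" "x = mkE s' 0" by (auto simp: G_def Lplus_def)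
    hence "l *s J k s = 0" "s = s'" by auto
    hence "s = 0" using False assms J_eq0[OF assms] by (simp add: lam_eq)
    thus "x \<in> {0}" using \<open>x = mkE s _\<close> by (simp add: lam_eq)
  qed
  thus ?thesis using pos_dim0 max_G by blast
qed

lemma pos_H: "positive H"
proof -
  have "H \<inter> Lplus \<subseteq> {0}" by (auto simp: H_def Lplus_def)
  thus ?thesis using pos_dim0 max_H by blast
qed

lemma U3:
  assumes "(\<sigma>::lam) \<noteq> 0" "positive L" "mkE \<sigma> 0 \<in> L"
  shows "L = Lplus"
proof -
  have "mkE \<sigma> 0 \<in> Lplus" by (auto simp: Lplus_def)
  hence "\<not> (L \<inter> Lplus \<subseteq> {0})" using assms by auto
  hence "Lplus \<subseteq> L" using parity[OF assms(2)] by blast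
  moreover have "max_iso Lplus" using max_G[of 1 0] Lplus_G by simp
  moreover have "iso_sub L" using assms(2) by (simp add: positive_def max_iso_def)
  ultimately show ?thesis unfolding max_iso_def by blast
qed

lemma U1:
  assumes tau: "(\<tau>::lam) \<noteq> 0" and pos: "positive L" and vL: "mkE 0 \<tau> \<in> L"
  shows "L = H"
proof -
  have sub: "vec.subspace L" and iso: "\<forall>v\<in>L. \<forall>w\<in>L. qf v w = 0" and mx: "max_iso L"
    using pos by (auto simp: positive_def max_iso_def iso_sub_def)
  consider "L \<inter> Lplus \<subseteq> {0}" | "Lplus \<subseteq> L" using parity[OF pos] by blast
  then show ?thesis
  proof cases
    case 2
    obtain e where e: "pairing \<tau> e \<noteq> 0" using nondeg[OF tau] by blast
    have "mkE e 0 \<in> L" using 2 by (auto simp: Lplus_def)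
    hence "qf (mkE 0 \<tau>) (mkE e 0) = 0" using iso vL by blast
    thus ?thesis using e by (simp add: qf_mkE pairing_c)
  next
    case 1
    have "L \<subseteq> H"
    proof
      fix x assume x: "x \<in> L"
      define s where "s = sigE x"
      define t where "t = tauE x"
      have xe: "x = mkE s t" using mkE_split s_def t_def by blast
      have "qf x (mkE 0 \<tau>) = 0" using iso x vL by blast
      hence h1: "pairing \<tau> s = 0" using xe by (simp add: qf_mkE pairing_c)
      have "qf x x = 0" using iso x by blast
      hence h2: "pairing t s = 0" using xe by (simp add: qf_self)
      have "s = 0"
      proof (rule ccontr)
        assume sn: "s \<noteq> 0"
        obtain b where b: "\<tau> = b *s J 1 s" using ann[of 1 s \<tau>] sn h1 by auto
        obtain b' where b': "t = b' *s J 1 s" using ann[of 1 s t] sn h2 by auto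
        have bn: "b \<noteq> 0" using b tau by auto
        have "x - (b'/b) *s mkE 0 \<tau> \<in> L"
          by (intro vec.subspace_diff[OF sub x] vec.subspace_scale[OF sub vL])
        moreover have "x - (b'/b) *s mkE 0 \<tau> = mkE s 0"
          using xe b b' bn by (simp add: mkE_smult mkE_diff lam_eq)
        ultimately have "mkE s 0 \<in> L \<inter> Lplus" by (auto simp: Lplus_def)
        thus False using 1 sn by auto
      qed
      thus "x \<in> H" using xe by (simp add: H_def)
    qed
    moreover have "iso_sub H" by (rule iso_H)
    ultimately show ?thesis using mx unfolding max_iso_def by blast
  qed
qed

lemma U2:
  assumes k: "k \<noteq> 0" and l: "l \<noteq> 0" and sg: "(\<sigma>::lam) \<noteq> 0" and pos: "positive L"
    and vL: "mkE \<sigma> (l *s J k \<sigma>) \<in> L"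
  shows "L = G k l"
proof -
  have sub: "vec.subspace L" and iso: "\<forall>v\<in>L. \<forall>w\<in>L. qf v w = 0" and mx: "max_iso L"
    using pos by (auto simp: positive_def max_iso_def iso_sub_def)
  consider "L \<inter> Lplus \<subseteq> {0}" | "Lplus \<subseteq> L" using parity[OF pos] by blast
  then show ?thesis
  proof cases
    case 2
    have sL: "mkE \<sigma> 0 \<in> L" using 2 by (auto simp: Lplus_def)
    have "mkE \<sigma> (l *s J k \<sigma>) - mkE \<sigma> 0 \<in> L" by (rule vec.subspace_diff[OF sub vL sL])
    hence dL: "mkE 0 (l *s J k \<sigma>) \<in> L" by (simp add: mkE_diff)
    have "l *s J k \<sigma> \<noteq> 0" using l J_eq0[OF k] sg by (auto simp: lam_eq)
    then obtain e where e: "pairing (l *s J k \<sigma>) e \<noteq> 0" using nondeg by blast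
    have "mkE e 0 \<in> L" using 2 by (auto simp: Lplus_def)
    hence "qf (mkE 0 (l *s J k \<sigma>)) (mkE e 0) = 0" using iso dL by blast
    hence "pairing (l *s J k \<sigma>) e = 0" by (simp add: qf_mkE pairing_c)
    thus ?thesis using e by simp
  next
    case 1
    have "L \<subseteq> G k l"
    proof
      fix x assume x: "x \<in> L"
      define s where "s = sigE x"
      define t where "t = tauE x"
      have xe: "x = mkE s t" using mkE_split s_def t_def by blast
      have "qf x (mkE \<sigma> (l *s J k \<sigma>)) = 0" using iso x vL by blast
      hence h1: "pairing t \<sigma> + pairing (l *s J k \<sigma>) s = 0" using xe by (simp add: qf_mkE)
      have "qf x x = 0" using iso x by blast
      hence h2: "pairing t s = 0" using xe by (simp add: qf_self)
      define d where "d = t - l *s J k s"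
      have hd1: "pairing d \<sigma> = 0" using h1 by (simp add: d_def pairing_c algebra_simps)
      have hd2: "pairing d s = 0" using h2 by (simp add: d_def pairing_c algebra_simps)
      have "d = 0"
      proof (cases "\<sigma>$1 * s$2 - \<sigma>$2 * s$1 = 0")
        case False
        have e1: "d$1 * (\<sigma>$1 * s$2 - \<sigma>$2 * s$1) = s$2 * pairing d \<sigma> - \<sigma>$2 * pairing d s"
          by (simp add: pairing_c algebra_simps)
        have e2: "d$2 * (\<sigma>$1 * s$2 - \<sigma>$2 * s$1) = \<sigma>$1 * pairing d s - s$1 * pairing d \<sigma>"
          by (simp add: pairing_c algebra_simps)
        show ?thesis using e1 e2 hd1 hd2 False by (simp add: lam_eq)
      next
        case True
        obtain a where a: "s = a *s \<sigma>" using par[OF sg True] by blast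
        have "x - a *s mkE \<sigma> (l *s J k \<sigma>) \<in> L"
          by (intro vec.subspace_diff[OF sub x] vec.subspace_scale[OF sub vL])
        moreover have "x - a *s mkE \<sigma> (l *s J k \<sigma>) = mkE 0 d"
        proof -
          have "x - a *s mkE \<sigma> (l *s J k \<sigma>) = mkE (s - a *s \<sigma>) (t - a *s (l *s J k \<sigma>))"
            unfolding xe by (simp only: mkE_smult mkE_diff)
          moreover have "s - a *s \<sigma> = 0" using a by simp
          moreover have "t - a *s (l *s J k \<sigma>) = d"
            unfolding d_def a lam_eq by (simp add: algebra_simps)
          ultimately show ?thesis by simp
        qed
        ultimately have dL: "mkE 0 d \<in> L" by simp
        show "d = 0"
        proof (rule ccontr)
          assume dn: "d \<noteq> 0"
          obtain b where b: "d = b *s J k \<sigma>" using ann[OF k sg hd1] by blast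
          have bn: "b \<noteq> 0" using b dn by auto
          have "(1/b) *s mkE 0 d \<in> L" by (rule vec.subspace_scale[OF sub dL])
          hence jL: "mkE 0 (J k \<sigma>) \<in> L" using b bn by (simp add: mkE_smult lam_eq)
          have "mkE \<sigma> (l *s J k \<sigma>) - l *s mkE 0 (J k \<sigma>) \<in> L"
            by (intro vec.subspace_diff[OF sub vL] vec.subspace_scale[OF sub jL])
          hence "mkE \<sigma> 0 \<in> L" by (simp add: mkE_smult mkE_diff)
          hence "mkE \<sigma> 0 \<in> L \<inter> Lplus" by (auto simp: Lplus_def)
          thus False using 1 sg by auto
        qed
      qed
      hence "t = l *s J k s" by (simp add: d_def)
      hence "x = mkE s (l *s J k s)" using xe by simp
      thus "x \<in> G k l" unfolding G_def by (rule image_eqI[of x _ s]) simp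
    qed
    moreover have "iso_sub (G k l)" by (rule iso_G)
    ultimately show ?thesis using mx unfolding max_iso_def by blast
  qed
qed

lemma Lminus_N:
  assumes k: "k \<noteq> 0" and s': "(\<sigma>'::lam) \<noteq> 0" and Lm: "negative Lm"
    and int: "Lplus \<inter> Lm = vec.span {mkE \<sigma>' 0}"
  shows "Lm = N k \<sigma>'"
proof -
  have iso: "\<forall>v\<in>Lm. \<forall>w\<in>Lm. qf v w = 0" and mx: "max_iso Lm"
    using Lm by (auto simp: negative_def max_iso_def iso_sub_def)
  have sL: "mkE \<sigma>' 0 \<in> Lm" using int vec.span_base[of "mkE \<sigma>' 0" "{mkE \<sigma>' 0}"] by blast
  have "Lm \<subseteq> N k \<sigma>'"
  proof
    fix x assume x: "x \<in> Lm"
    define s where "s = sigE x"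
    define t where "t = tauE x"
    have xe: "x = mkE s t" using mkE_split s_def t_def by blast
    have "qf x (mkE \<sigma>' 0) = 0" using iso x sL by blast
    hence h1: "pairing t \<sigma>' = 0" using xe by (simp add: qf_mkE pairing_c)
    have "qf x x = 0" using iso x by blast
    hence h2: "pairing t s = 0" using xe by (simp add: qf_self)
    obtain b where b: "t = b *s J k \<sigma>'" using ann[OF k s' h1] by blast
    have pz: "pairing (J k \<sigma>') s = 0"
    proof (rule ccontr)
      assume pn: "pairing (J k \<sigma>') s \<noteq> 0"
      have "pairing t s = b * pairing (J k \<sigma>') s" using b by (simp add: pairing_c algebra_simps)
      hence "b = 0" using h2 pn by simp
      hence "x = mkE s 0" using xe b by simp
      hence "x \<in> Lplus \<inter> Lm" using x by (auto simp: Lplus_def)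
      hence "x \<in> range (\<lambda>a. a *s mkE \<sigma>' 0)" using int by (simp add: vec.span_singleton)
      then obtain a where "x = a *s mkE \<sigma>' 0" by blast
      hence "s = a *s \<sigma>'" using \<open>x = mkE s 0\<close> by (simp add: mkE_smult)
      hence "pairing (J k \<sigma>') s = 0" by (simp add: pairing_c algebra_simps)
      thus False using pn by simp
    qed
    hence "\<sigma>'$1 * s$2 - \<sigma>'$2 * s$1 = 0" using k by (simp add: pair_J)
    then obtain a where "s = a *s \<sigma>'" using par[OF s'] by blast
    thus "x \<in> N k \<sigma>'" using xe b by (auto simp: N_def)
  qed
  thus ?thesis using iso_N mx unfolding max_iso_def by blast
qed

theorem lemma10p2:
  fixes w :: "lam \<Rightarrow> lam \<Rightarrow> complex"
    and Lminus :: "espace set"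
    and \<sigma>' \<sigma> \<tau> :: lam
  assumes w: "alt_form w" "w \<noteq> (\<lambda>_ _. 0)"
    and Lm: "negative Lminus"
    and s': "\<sigma>' \<noteq> 0" "Lplus \<inter> Lminus = vec.span {mkE \<sigma>' 0}"
    and v: "mkE \<sigma> \<tau> \<noteq> 0" "qf (mkE \<sigma> \<tau>) (mkE \<sigma> \<tau>) = 0"
  shows "(\<sigma> \<noteq> 0 \<longrightarrow> (\<forall>lam::complex. \<tau> = lam *s contr w \<sigma> \<longrightarrow>
            pi_minus Lminus (mkE \<sigma> \<tau>) = vec.span {mkE \<sigma>' (lam *s contr w \<sigma>')}))
       \<and> (\<sigma> = 0 \<longrightarrow> pi_minus Lminus (mkE \<sigma> \<tau>) = vec.span {mkE 0 (contr w \<sigma>')})"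
proof -
  define k where "k = w (axis 1 1) (axis 2 1)"
  have c: "contr w = J k" using contr_J[OF w(1)] k_def by simp
  have k: "k \<noteq> 0" using k_nz[OF w] k_def by simp
  have LN: "Lminus = N k \<sigma>'" by (rule Lminus_N[OF k s'(1) Lm s'(2)])
  have Jn: "J k \<sigma>' \<noteq> 0" using J_eq0[OF k] s'(1) by simp
  show ?thesis
  proof (intro conjI impI allI)
    fix l :: complex
    assume sg: "\<sigma> \<noteq> 0" and tl: "\<tau> = l *s contr w \<sigma>"
    have tl': "\<tau> = l *s J k \<sigma>" using tl c by simp
    have LP: "Lam_pos (mkE \<sigma> \<tau>) = G k l"
      unfolding Lam_pos_def
    proof (rule the_equality)
      show "positive (G k l) \<and> mkE \<sigma> \<tau> \<in> G k l" using pos_G[OF k] tl' by (auto simp: G_def)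
    next
      fix L assume L: "positive L \<and> mkE \<sigma> \<tau> \<in> L"
      show "L = G k l"
      proof (cases "l = 0")
        case True
        thus ?thesis using U3[OF sg, of L] L tl' Lplus_G[of k] by simp
      next
        case False
        thus ?thesis using U2[OF k False sg, of L] L tl' by simp
      qed
    qed
    have "G k l \<inter> N k \<sigma>' = range (\<lambda>a. a *s mkE \<sigma>' (l *s J k \<sigma>'))"
    proof (intro set_eqI iffI)
      fix x assume "x \<in> G k l \<inter> N k \<sigma>'"
      hence "x \<in> G k l" "x \<in> N k \<sigma>'" by auto
      then obtain s a b where x1: "x = mkE s (l *s J k s)" and x2: "x = mkE (a *s \<sigma>') (b *s J k \<sigma>')"
        unfolding G_def N_def by blast
      hence "s = a *s \<sigma>'" by simp
      hence "x = a *s mkE \<sigma>' (l *s J k \<sigma>')" using x1 by (simp add: mkE_smult lam_eq algebra_simps)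
      thus "x \<in> range (\<lambda>a. a *s mkE \<sigma>' (l *s J k \<sigma>'))" by blast
    next
      fix x assume "x \<in> range (\<lambda>a. a *s mkE \<sigma>' (l *s J k \<sigma>'))"
      then obtain a where x: "x = a *s mkE \<sigma>' (l *s J k \<sigma>')" by blast
      have "x = mkE (a *s \<sigma>') (l *s J k (a *s \<sigma>'))" using x by (simp add: mkE_smult lam_eq algebra_simps)
      hence g: "x \<in> G k l" unfolding G_def by (rule image_eqI[of x _ "a *s \<sigma>'"]) simp
      have "x = mkE (a *s \<sigma>') ((a*l) *s J k \<sigma>')" using x by (simp add: mkE_smult lam_eq algebra_simps)
      hence "x \<in> N k \<sigma>'" by (auto simp: N_def)
      with g show "x \<in> G k l \<inter> N k \<sigma>'" by blast
    qed
    thus "pi_minus Lminus (mkE \<sigma> \<tau>) = vec.span {mkE \<sigma>' (l *s contr w \<sigma>')}"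
      unfolding pi_minus_def LP LN c vec.span_singleton .
  next
    assume sg: "\<sigma> = 0"
    have tn: "\<tau> \<noteq> 0" using v(1) sg by simp
    have LP: "Lam_pos (mkE \<sigma> \<tau>) = H"
      unfolding Lam_pos_def
    proof (rule the_equality)
      show "positive H \<and> mkE \<sigma> \<tau> \<in> H" using pos_H sg by (auto simp: H_def)
    next
      fix L assume L: "positive L \<and> mkE \<sigma> \<tau> \<in> L"
      thus "L = H" using U1[OF tn, of L] sg by simp
    qed
    have "H \<inter> N k \<sigma>' = range (\<lambda>a. a *s mkE 0 (J k \<sigma>'))"
    proof (intro set_eqI iffI)
      fix x assume "x \<in> H \<inter> N k \<sigma>'"
      hence "x \<in> H" "x \<in> N k \<sigma>'" by auto
      then obtain t a b where x1: "x = mkE 0 t" and x2: "x = mkE (a *s \<sigma>') (b *s J k \<sigma>')"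
        unfolding H_def N_def by blast
      hence "a *s \<sigma>' = 0" by simp
      hence "a = 0" using s'(1) by (auto simp: lam_eq)
      hence "x = b *s mkE 0 (J k \<sigma>')" using x2 by (simp add: mkE_smult lam_eq)
      thus "x \<in> range (\<lambda>a. a *s mkE 0 (J k \<sigma>'))" by blast
    next
      fix x assume "x \<in> range (\<lambda>a. a *s mkE 0 (J k \<sigma>'))"
      then obtain b where x: "x = b *s mkE 0 (J k \<sigma>')" by blast
      have "x = mkE 0 (b *s J k \<sigma>')" using x by (simp add: mkE_smult)
      hence g: "x \<in> H" by (simp add: H_def)
      have "x = mkE (0 *s \<sigma>') (b *s J k \<sigma>')" using x by (simp add: mkE_smult lam_eq)
      hence "x \<in> N k \<sigma>'" by (auto simp: N_def)
      with g show "x \<in> H \<inter> N k \<sigma>'" by blast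
    qed
    thus "pi_minus Lminus (mkE \<sigma> \<tau>) = vec.span {mkE 0 (contr w \<sigma>')}"
      unfolding pi_minus_def LP LN c vec.span_singleton .
  qed
qed

end
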